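(* Let $M\ge1$, let $\Delta_M=\{\mathbf d\in[0,1]^M:\sum_i d_i=1\}$, and for each $j\ge0$ let $C_{vj}:\Delta_M\to[0,1]$ be Lipschitz continuous functions with $C_{vj}(\mathbf d)\ge C_{v(j+1)}(\mathbf d)$ for all $j,\mathbf d$. For $\epsilon_v>0$ let $J_{\epsilon_v}(\mathbf d)$ be the smallest integer $j$ with $C_{vj}(\mathbf d)>C_{v(j+1)}(\mathbf d)+\epsilon_v$. For $p\in[0,1]$, $\mathbf d\in\Delta_M$ and integer $n\ge0$ let $q_v(p\mathbf d,n)=\sum_{j=0}^{n}\binom{n}{j}p^j(1-p)^{n-j}C_{vj}(\mathbf d)$, extended to real $\hat K\ge0$ by $q_v(p\mathbf d,\hat K)=(\lfloor\hat K\rfloor+1-\hat K)q_v(p\mathbf d,\lfloor\hat K\rfloor)+(\hat K-\lfloor\hat K\rfloor)q_v(p\mathbf d,\lfloor\hat K\rfloor+1)$. Let $\hat K_0<\hat K_1<\dots<\hat K_L$ be integers, and suppose values $p(\hat K_i)\in(0,1)$ and $\mathbf d(\hat K_i)\in\Delta_M$ are given; set $\mathbf p(\hat K_i)=p(\hat K_i)\mathbf d(\hat K_i)$ and $q_v^*(\hat K_i)=q_v(\mathbf p(\hat K_i),\hat K_i)$. For $i=1,\dots,L$ and $0\le\lambda<1$ define $\hat K_{i\lambda}=(1-\lambda)\hat K_{i-1}+\lambda\hat K_i$, $\mathbf d_{i\lambda}=(1-\lambda)\mathbf d(\hat K_{i-1})+\lambda\mathbf d(\hat K_i)$, $q^*_{vi\lambda}=(1-\lambda)q_v^*(\hat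 K_{i-1})+\lambda q_v^*(\hat K_i)$. Assume (Pinpoints Condition): (1) there is $\epsilon_q>0$ with $q_v^*(\hat K_{i-1})-q_v^*(\hat K_i)\ge\epsilon_q$ for $i=1,\dots,L$; (2) there is $\epsilon_v>0$ with $\hat K_{i\lambda}>J_{\epsilon_v}(\mathbf d_{i\lambda})$ for all $i=1,\dots,L$ and $0\le\lambda<1$; (3) there are $0<\underline p<\overline p<1$ with $\underline p\le p(\hat K_i)\le\overline p$ for $i=1,\dots,L$; (4) $q_v(\overline p\,\mathbf d_{i\lambda},\hat K_{i\lambda})\le q^*_{vi\lambda}\le q_v(\underline p\,\mathbf d_{i\lambda},\hat K_{i\lambda})$ for all $i=1,\dots,L$ and $0\le\lambda<1$. Complete the function by the Interpolation Approach: for $\hat K=\hat K_{i\lambda}$ ($i=1,\dots,L$, $0\le\lambda<1$), choose $p(\hat K)\in[\underline p,\overline p]$ with $q_v(p(\hat K)\mathbf d_{i\lambda},\hat K_{i\lambda})=q^*_{vi\lambda}$, and set $\mathbf d(\hat K)=\mathbf d_{i\lambda}$, $\mathbf p(\hat K)=p(\hat K)\mathbf d_{i\lambda}$, and $q_v^*(\hat K)=(\lfloor\hat K\rfloor+1-\hat K)q_v(\mathbf p(\hat K),\lfloor\hat K\rfloor)+(\hat K-\lfloor\hat K\rfloor)q_v(\mathbf p(\hat K),\lfloor\hat K\rfloor+1)$. Then on $[\hat K_0,\hat K_L]$ the following (Monotonicity and Gradient Condition) hold: (a) $\mathbf p(\hat K)$ is Lipschitz continuous: there is $K_g>0$ with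 $\|\mathbf p(\hat K_a)-\mathbf p(\hat K_b)\|\le K_g|\hat K_a-\hat K_b|$ for all $\hat K_a,\hat K_b\in[\hat K_0,\hat K_L]$; (b) $q_v^*(\hat K)$ is continuous and strictly decreasing, and there is $\epsilon'>0$ with $|q_v^*(\hat K_a)-q_v^*(\hat K_b)|\ge\epsilon'|\hat K_a-\hat K_b|$ for all $\hat K_a,\hat K_b\in[\hat K_0,\hat K_L]$; (c) $\hat K>J_{\epsilon_v}(\mathbf d(\hat K))$ for all $\hat K\in[\hat K_0,\hat K_L)$; (d) $\underline p\le p(\hat K)\le\overline p$ for all $\hat K\in[\hat K_0,\hat K_L]$.
   Context: Setting: each of several homogeneous users has $M$ transmission options plus idling; a user's transmission probability vector is $\mathbf p=p\mathbf d$, where $p$ is the probability of transmitting and $\mathbf d\in\Delta_M$ gives the conditional probabilities of the options. $C_{vj}(\mathbf d)$ is the success probability of a virtual packet transmitted in parallel with $j$ real packets when all users use direction $\mathbf d$, and $q_v(p\mathbf d,n)$ is the virtual packet success probability when $n$ users each use $p\mathbf d$. The Lipschitz continuity of each $C_{vj}(\cdot)$ in $\mathbf d$ is a standing regularity assumption used implicitly. $\hat K$ plays the role of a user-number estimate and $q_v^*$ is the "theoretical channel contention measure"; the integers $\hat K_i$ are called pinpoints. *)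

theory Defs
  imports "HOL-Analysis.Analysis"
begin

text \<open>The probability simplex Delta_M; the dimension M is the cardinality of the finite index type 'm.\<close>
definition simplexM :: "(real ^ 'm) set" where
  "simplexM = {d. (\<forall>i. 0 \<le> d $ i \<and> d $ i \<le> 1) \<and> (\<Sum>i\<in>UNIV. d $ i) = 1}"

text \<open>J_eps(d): smallest j with C_j(d) > C_(j+1)(d) + eps (meaningful when such j exists).\<close>
definition J_exists :: "(nat \<Rightarrow> real ^ 'm \<Rightarrow> real) \<Rightarrow> real \<Rightarrow> real ^ 'm \<Rightarrow> bool" where
  "J_exists C eps d = (\<exists>j. C j d > C (Suc j) d + eps)"

definition Jeps :: "(nat \<Rightarrow> real ^ 'm \<Rightarrow> real) \<Rightarrow> real \<Rightarrow> real ^ 'm \<Rightarrow> nat" where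
  "Jeps C eps d = (LEAST j. C j d > C (Suc j) d + eps)"

definition qv :: "(nat \<Rightarrow> real ^ 'm \<Rightarrow> real) \<Rightarrow> real \<Rightarrow> real ^ 'm \<Rightarrow> nat \<Rightarrow> real" where
  "qv C p d n = (\<Sum>j=0..n. real (n choose j) * p ^ j * (1 - p) ^ (n - j) * C j d)"

definition qvr :: "(nat \<Rightarrow> real ^ 'm \<Rightarrow> real) \<Rightarrow> real \<Rightarrow> real ^ 'm \<Rightarrow> real \<Rightarrow> real" where
  "qvr C p d K = (of_int \<lfloor>K\<rfloor> + 1 - K) * qv C p d (nat \<lfloor>K\<rfloor>)
                 + (K - of_int \<lfloor>K\<rfloor>) * qv C p d (nat \<lfloor>K\<rfloor> + 1)"

definition Kil :: "(nat \<Rightarrow> nat) \<Rightarrow> nat \<Rightarrow> real \<Rightarrow> real" where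
  "Kil Kp i l = (1 - l) * real (Kp (i - 1)) + l * real (Kp i)"

definition dil :: "(nat \<Rightarrow> real ^ 'm) \<Rightarrow> nat \<Rightarrow> real \<Rightarrow> real ^ 'm" where
  "dil dd i l = (1 - l) *\<^sub>R dd (i - 1) + l *\<^sub>R dd i"

definition qstar_pin :: "(nat \<Rightarrow> real ^ 'm \<Rightarrow> real) \<Rightarrow> (nat \<Rightarrow> nat) \<Rightarrow> (nat \<Rightarrow> real) \<Rightarrow> (nat \<Rightarrow> real ^ 'm) \<Rightarrow> nat \<Rightarrow> real" where
  "qstar_pin C Kp pp dd i = qvr C (pp i) (dd i) (real (Kp i))"

definition qil :: "(nat \<Rightarrow> real ^ 'm \<Rightarrow> real) \<Rightarrow> (nat \<Rightarrow> nat) \<Rightarrow> (nat \<Rightarrow> real) \<Rightarrow> (nat \<Rightarrow> real ^ 'm) \<Rightarrow> nat \<Rightarrow> real \<Rightarrow> real" where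
  "qil C Kp pp dd i l = (1 - l) * qstar_pin C Kp pp dd (i - 1) + l * qstar_pin C Kp pp dd i"

end

theory Submission
  imports Defs
begin


definition bq :: "(nat \<Rightarrow> real) \<Rightarrow> real \<Rightarrow> nat \<Rightarrow> real" where
  "bq c p n = (\<Sum>j\<le>n. real (n choose j) * p ^ j * (1 - p) ^ (n - j) * c j)"

lemma qv_bq: "qv C p d n = bq (\<lambda>j. C j d) p n"
  unfolding qv_def bq_def by (simp add: atLeast0AtMost)

lemma bq_rec: "bq c p (Suc n) = (1 - p) * bq c p n + p * bq (\<lambda>j. c (Suc j)) p n"
proof -
  define Y where "Y i = real (n choose i) * p ^ i * (1 - p) ^ (Suc n - i) * c i" for i
  have Y1: "(\<Sum>i\<le>Suc n. Y i) = (1 - p) * bq c p n"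
  proof -
    have "(\<Sum>i\<le>Suc n. Y i) = (\<Sum>i\<le>n. Y i)" by (simp add: Y_def)
    also have "\<dots> = (\<Sum>i\<le>n. (1 - p) * (real (n choose i) * p ^ i * (1 - p) ^ (n - i) * c i))"
      by (rule sum.cong) (auto simp: Y_def Suc_diff_le)
    finally show ?thesis by (simp add: bq_def sum_distrib_left)
  qed
  have Y2: "(\<Sum>i\<le>Suc n. Y i) = Y 0 + (\<Sum>i\<le>n. Y (Suc i))" by (rule sum.atMost_Suc_shift)
  have "bq c p (Suc n) = c 0 * (1 - p) ^ Suc n +
      (\<Sum>i\<le>n. real (Suc n choose Suc i) * p ^ Suc i * (1 - p) ^ (n - i) * c (Suc i))"
    unfolding bq_def by (subst sum.atMost_Suc_shift) simp
  also have "(\<Sum>i\<le>n. real (Suc n choose Suc i) * p ^ Suc i * (1 - p) ^ (n - i) * c (Suc i))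
     = p * bq (\<lambda>j. c (Suc j)) p n + (\<Sum>i\<le>n. Y (Suc i))"
    by (simp add: bq_def Y_def sum_distrib_left sum.distrib[symmetric] algebra_simps)
  finally show ?thesis using Y1 Y2 by (simp add: Y_def)
qed

lemma bq_diff: "bq (\<lambda>j. c1 j - c2 j) p n = bq c1 p n - bq c2 p n"
  unfolding bq_def by (simp add: sum_subtractf algebra_simps)

lemma bq_one: "bq (\<lambda>j. 1) p n = 1"
  using binomial_ring[of p "1 - p" n] unfolding bq_def by (simp add: atLeast0AtMost)

lemma weight_nonneg: "0 \<le> p \<Longrightarrow> p \<le> 1 \<Longrightarrow> 0 \<le> real (n choose j) * p ^ j * (1 - p) ^ (n - j)"
  by simp

lemma bq_nonneg: assumes "0 \<le> p" "p \<le> 1" "\<And>j. j \<le> n \<Longrightarrow> 0 \<le> c j" shows "0 \<le> bq c p n"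
  unfolding bq_def using assms by (intro sum_nonneg) simp

lemma bq_le: assumes "0 \<le> p" "p \<le> 1" "\<And>j. j \<le> n \<Longrightarrow> c1 j \<le> c2 j" shows "bq c1 p n \<le> bq c2 p n"
  using bq_nonneg[of p n "\<lambda>j. c2 j - c1 j"] assms bq_diff[of c2 c1 p n] by simp

lemma bq_const: "bq (\<lambda>j. M) p n = M"
proof -
  have "bq (\<lambda>j. M) p n = M * bq (\<lambda>j. 1) p n" unfolding bq_def sum_distrib_left
    by (rule sum.cong) auto
  then show ?thesis by (simp add: bq_one)
qed

lemma bq_abs: assumes "0 \<le> p" "p \<le> 1" "\<And>j. j \<le> n \<Longrightarrow> \<bar>c j\<bar> \<le> M" shows "\<bar>bq c p n\<bar> \<le> M"
proof -
  have h: "\<And>j. j \<le> n \<Longrightarrow> c j \<le> M \<and> - M \<le> c j" using assms(3) by (smt (verit))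
  have "bq c p n \<le> bq (\<lambda>j. M) p n" using assms h by (intro bq_le) auto
  moreover have "bq (\<lambda>j. - M) p n \<le> bq c p n" using assms h by (intro bq_le) auto
  ultimately show ?thesis by (simp add: bq_const)
qed

lemma bq_mono: assumes "\<And>j. c (Suc j) \<le> c j" "0 \<le> p1" "p1 \<le> p2" "p2 \<le> 1"
  shows "bq c p2 n \<le> bq c p1 n"
  using assms(1)
proof (induction n arbitrary: c)
  case 0 then show ?case by (simp add: bq_def)
next
  case (Suc n)
  have A: "bq c p2 n \<le> bq c p1 n" using Suc.IH[of c] Suc.prems by blast
  have B: "bq (\<lambda>j. c (Suc j)) p2 n \<le> bq (\<lambda>j. c (Suc j)) p1 n"
    using Suc.IH[of "\<lambda>j. c (Suc j)"] Suc.prems by blast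
  have D0: "0 \<le> bq (\<lambda>j. c j - c (Suc j)) p2 n"
    using Suc.prems assms(2-4) by (intro bq_nonneg) auto
  have D: "0 \<le> bq c p2 n - bq (\<lambda>j. c (Suc j)) p2 n"
    using D0 bq_diff[of c "\<lambda>j. c (Suc j)" p2 n] by simp
  have "bq c p1 (Suc n) - bq c p2 (Suc n) = (1 - p1) * (bq c p1 n - bq c p2 n)
     + p1 * (bq (\<lambda>j. c (Suc j)) p1 n - bq (\<lambda>j. c (Suc j)) p2 n)
     + (p2 - p1) * (bq c p2 n - bq (\<lambda>j. c (Suc j)) p2 n)"
    by (simp add: bq_rec algebra_simps)
  also have "\<dots> \<ge> 0" using A B D assms(2-4) by (intro add_nonneg_nonneg mult_nonneg_nonneg) auto
  finally show ?case by simp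
qed

lemma bq_ge_min: assumes "0 \<le> m" "m \<le> p" "m \<le> 1 - p" "\<And>j. j \<le> n \<Longrightarrow> 0 \<le> g j"
  shows "m ^ n * (\<Sum>j\<le>n. g j) \<le> bq g p n"
  unfolding bq_def sum_distrib_left
proof (rule sum_mono)
  fix j assume j: "j \<in> {..n}"
  have e: "m ^ n = m ^ j * m ^ (n - j)" using j by (simp flip: power_add)
  have p1: "m ^ j \<le> p ^ j" using assms(1,2) by (intro power_mono)
  have p2: "m ^ (n - j) \<le> (1 - p) ^ (n - j)" using assms(1,3) by (intro power_mono)
  have "m ^ j * m ^ (n - j) \<le> p ^ j * (1 - p) ^ (n - j)"
    using p1 p2 assms(1,2) by (intro mult_mono) auto
  also have "\<dots> \<le> real (n choose j) * (p ^ j * (1 - p) ^ (n - j))"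
  proof -
    have "1 \<le> real (n choose j)" using j by (simp add: Suc_leI)
    moreover have "0 \<le> p ^ j * (1 - p) ^ (n - j)" using assms by simp
    ultimately show ?thesis using mult_right_mono[of 1 "real (n choose j)" "p ^ j * (1 - p) ^ (n - j)"] by simp
  qed
  finally have "m ^ n \<le> real (n choose j) * p ^ j * (1 - p) ^ (n - j)" using e by (simp add: mult.assoc)
  moreover have "0 \<le> g j" using assms(4) j by simp
  ultimately show "m ^ n * g j \<le> real (n choose j) * p ^ j * (1 - p) ^ (n - j) * g j"
    by (rule mult_right_mono)
qed

lemma bq_lower: assumes "\<And>j. c (Suc j) \<le> c j" "0 \<le> m" "m \<le> p1" "p1 \<le> p2" "p2 \<le> 1 - m"
  shows "(p2 - p1) * m ^ n * (c 0 - c (Suc n)) \<le> bq c p1 (Suc n) - bq c p2 (Suc n)"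
proof -
  have A: "bq c p2 n \<le> bq c p1 n" using assms by (intro bq_mono) auto
  have B: "bq (\<lambda>j. c (Suc j)) p2 n \<le> bq (\<lambda>j. c (Suc j)) p1 n" using assms by (intro bq_mono) auto
  have D: "m ^ n * (\<Sum>j\<le>n. c j - c (Suc j)) \<le> bq (\<lambda>j. c j - c (Suc j)) p2 n"
    using assms by (intro bq_ge_min) auto
  have T: "(\<Sum>j\<le>n. c j - c (Suc j)) = c 0 - c (Suc n)" by (rule sum_telescope)
  have D': "m ^ n * (c 0 - c (Suc n)) \<le> bq c p2 n - bq (\<lambda>j. c (Suc j)) p2 n"
    using D T bq_diff[of c "\<lambda>j. c (Suc j)" p2 n] by simp
  have "bq c p1 (Suc n) - bq c p2 (Suc n) = (1 - p1) * (bq c p1 n - bq c p2 n)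
     + p1 * (bq (\<lambda>j. c (Suc j)) p1 n - bq (\<lambda>j. c (Suc j)) p2 n)
     + (p2 - p1) * (bq c p2 n - bq (\<lambda>j. c (Suc j)) p2 n)"
    by (simp add: bq_rec algebra_simps)
  moreover have "(p2 - p1) * (m ^ n * (c 0 - c (Suc n))) \<le> (p2 - p1) * (bq c p2 n - bq (\<lambda>j. c (Suc j)) p2 n)"
    using D' assms by (intro mult_left_mono) auto
  moreover have "0 \<le> (1 - p1) * (bq c p1 n - bq c p2 n)" using A assms by auto
  moreover have "0 \<le> p1 * (bq (\<lambda>j. c (Suc j)) p1 n - bq (\<lambda>j. c (Suc j)) p2 n)" using B assms by auto
  ultimately show ?thesis by (simp add: mult.assoc)
qed



lemma chain_lemma:
  fixes x :: "nat \<Rightarrow> real" and R :: "real \<Rightarrow> real \<Rightarrow> bool"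
  assumes trans: "\<And>a b c. a \<le> b \<Longrightarrow> b \<le> c \<Longrightarrow> R a b \<Longrightarrow> R b c \<Longrightarrow> R a c"
    and seg: "\<And>i a b. i < L \<Longrightarrow> x i \<le> a \<Longrightarrow> a \<le> b \<Longrightarrow> b \<le> x (Suc i) \<Longrightarrow> R a b"
    and refl: "\<And>a. R a a"
  shows "x 0 \<le> a \<Longrightarrow> a \<le> b \<Longrightarrow> b \<le> x L \<Longrightarrow> R a b"
proof -
  have "\<forall>a b. x 0 \<le> a \<longrightarrow> a \<le> b \<longrightarrow> b \<le> x k \<longrightarrow> R a b" if "k \<le> L" for k
    using that
  proof (induction k)
    case 0 then show ?case using refl by (metis order_antisym order_trans)
  next
    case (Suc k)
    show ?case
    proof (intro allI impI)
      fix a b assume ab: "x 0 \<le> a" "a \<le> b" "b \<le> x (Suc k)"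
      show "R a b"
      proof (cases "b \<le> x k")
        case True then show ?thesis using Suc ab by auto
      next
        case False
        show ?thesis
        proof (cases "x k \<le> a")
          case True then show ?thesis using seg[of k a b] Suc.prems ab by auto
        next
          case False2: False
          have "R a (x k)" using Suc ab False2 by auto
          moreover have "R (x k) b" using seg[of k "x k" b] Suc.prems ab False by auto
          ultimately show ?thesis using trans[of a "x k" b] False False2 by auto
        qed
      qed
    qed
  qed
  then show "x 0 \<le> a \<Longrightarrow> a \<le> b \<Longrightarrow> b \<le> x L \<Longrightarrow> R a b" by blast
qed

lemma antitone_le:
  fixes c :: "nat \<Rightarrow> real"
  assumes "\<And>j. c (Suc j) \<le> c j" "i \<le> k" shows "c k \<le> c i"
  using assms(2)
proof (induction k)
  case 0 then show ?case by simp
next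
  case (Suc k) then show ?case using assms(1)[of k] by (cases "i = Suc k") (auto simp: le_Suc_eq)
qed

lemma bq_range: assumes "0 \<le> p" "p \<le> 1" "\<And>j. 0 \<le> c j \<and> c j \<le> 1"
  shows "0 \<le> bq c p n \<and> bq c p n \<le> 1"
proof
  show "0 \<le> bq c p n" using assms by (intro bq_nonneg) auto
  have "bq c p n \<le> bq (\<lambda>j. 1) p n" using assms by (intro bq_le) auto
  then show "bq c p n \<le> 1" by (simp add: bq_one)
qed

lemma bq_lower_gen:
  assumes "\<And>j. c (Suc j) \<le> c j" "0 \<le> m" "m \<le> 1" "m \<le> p1" "p1 \<le> p2" "p2 \<le> 1 - m" "k \<le> M"
  shows "(p2 - p1) * m ^ M * (c 0 - c k) \<le> bq c p1 k - bq c p2 k"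
proof (cases k)
  case 0 then show ?thesis by (simp add: bq_def)
next
  case (Suc k')
  have "(p2 - p1) * m ^ k' * (c 0 - c (Suc k')) \<le> bq c p1 (Suc k') - bq c p2 (Suc k')"
    using assms by (intro bq_lower) auto
  moreover have "m ^ M \<le> m ^ k'" using assms Suc by (intro power_decreasing) auto
  moreover have "0 \<le> c 0 - c k" using antitone_le[of c 0 k] assms by auto
  moreover have "0 \<le> p2 - p1" using assms by simp
  ultimately show ?thesis using Suc
    by (smt (verit, best) mult_left_mono mult_right_mono mult_nonneg_nonneg)
qed



lemma qvr_split: assumes "0 \<le> K"
  shows "qvr C p d K = (1 - (K - real (nat \<lfloor>K\<rfloor>))) * qv C p d (nat \<lfloor>K\<rfloor>)
      + (K - real (nat \<lfloor>K\<rfloor>)) * qv C p d (Suc (nat \<lfloor>K\<rfloor>))"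
proof -
  have "of_int \<lfloor>K\<rfloor> = real (nat \<lfloor>K\<rfloor>)" using assms by simp
  then show ?thesis unfolding qvr_def by (simp add: algebra_simps)
qed

lemma frac_bounds: assumes "0 \<le> K"
  shows "0 \<le> K - real (nat \<lfloor>K\<rfloor>)" "K - real (nat \<lfloor>K\<rfloor>) < 1"
proof -
  have "of_int \<lfloor>K\<rfloor> = real (nat \<lfloor>K\<rfloor>)" using assms by simp
  then show "0 \<le> K - real (nat \<lfloor>K\<rfloor>)" "K - real (nat \<lfloor>K\<rfloor>) < 1"
    by (metis diff_ge_0_iff_ge of_int_floor_le, metis floor_correct add.commute diff_less_eq of_int_add of_int_1)
qed

lemma qv_range:
  assumes "\<And>j. 0 \<le> C j d \<and> C j d \<le> 1" "0 \<le> p" "p \<le> 1"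
  shows "0 \<le> qv C p d n \<and> qv C p d n \<le> 1"
  unfolding qv_bq using assms by (intro bq_range) auto

lemma qvr_range:
  assumes "\<And>j. 0 \<le> C j d \<and> C j d \<le> 1" "0 \<le> p" "p \<le> 1" "0 \<le> K"
  shows "0 \<le> qvr C p d K \<and> qvr C p d K \<le> 1"
proof -
  define t where "t = K - real (nat \<lfloor>K\<rfloor>)"
  have t: "0 \<le> t" "t < 1" using frac_bounds[OF assms(4)] by (auto simp: t_def)
  have q1: "0 \<le> qv C p d (nat \<lfloor>K\<rfloor>) \<and> qv C p d (nat \<lfloor>K\<rfloor>) \<le> 1" using assms by (intro qv_range)
  have q2: "0 \<le> qv C p d (Suc (nat \<lfloor>K\<rfloor>)) \<and> qv C p d (Suc (nat \<lfloor>K\<rfloor>)) \<le> 1" using assms by (intro qv_range)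
  have e: "qvr C p d K = (1 - t) * qv C p d (nat \<lfloor>K\<rfloor>) + t * qv C p d (Suc (nat \<lfloor>K\<rfloor>))"
    using qvr_split[OF assms(4)] by (simp add: t_def)
  show ?thesis unfolding e using t q1 q2
    by (smt (verit, best) mult_left_le mult_nonneg_nonneg mult_left_mono)
qed

lemma qv_lip_d:
  assumes "0 \<le> p" "p \<le> 1" "\<And>j. j \<le> n \<Longrightarrow> B-lipschitz_on S (C j)" "d1 \<in> S" "d2 \<in> S"
  shows "\<bar>qv C p d1 n - qv C p d2 n\<bar> \<le> B * norm (d1 - d2)"
proof -
  have "qv C p d1 n - qv C p d2 n = bq (\<lambda>j. C j d1 - C j d2) p n"
    by (simp add: qv_bq bq_diff)
  also have "\<bar>\<dots>\<bar> \<le> B * norm (d1 - d2)"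
  proof (rule bq_abs)
    fix j assume "j \<le> n"
    then have "dist (C j d1) (C j d2) \<le> B * dist d1 d2" using assms by (intro lipschitz_onD) auto
    then show "\<bar>C j d1 - C j d2\<bar> \<le> B * norm (d1 - d2)" by (simp add: dist_norm dist_real_def)
  qed (use assms in auto)
  finally show ?thesis .
qed

lemma qvr_lip_d:
  assumes "0 \<le> p" "p \<le> 1" "0 \<le> K" "\<And>j. j \<le> Suc (nat \<lfloor>K\<rfloor>) \<Longrightarrow> B-lipschitz_on S (C j)"
    "d1 \<in> S" "d2 \<in> S"
  shows "\<bar>qvr C p d1 K - qvr C p d2 K\<bar> \<le> B * norm (d1 - d2)"
proof -
  define t where "t = K - real (nat \<lfloor>K\<rfloor>)"
  define n where "n = nat \<lfloor>K\<rfloor>"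
  have t: "0 \<le> t" "t < 1" using frac_bounds[OF assms(3)] by (auto simp: t_def)
  have a1: "\<bar>qv C p d1 n - qv C p d2 n\<bar> \<le> B * norm (d1 - d2)"
    using assms by (intro qv_lip_d) (auto simp: n_def)
  have a2: "\<bar>qv C p d1 (Suc n) - qv C p d2 (Suc n)\<bar> \<le> B * norm (d1 - d2)"
    using assms by (intro qv_lip_d) (auto simp: n_def)
  have "qvr C p d1 K - qvr C p d2 K = (1 - t) * (qv C p d1 n - qv C p d2 n)
       + t * (qv C p d1 (Suc n) - qv C p d2 (Suc n))"
    using qvr_split[OF assms(3), of C p d1] qvr_split[OF assms(3), of C p d2]
    by (simp add: t_def n_def algebra_simps)
  also have "\<bar>\<dots>\<bar> \<le> (1 - t) * (B * norm (d1 - d2)) + t * (B * norm (d1 - d2))"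
  proof -
    have "\<bar>(1 - t) * (qv C p d1 n - qv C p d2 n)\<bar> \<le> (1 - t) * (B * norm (d1 - d2))"
      using a1 t by (simp add: abs_mult mult_left_mono)
    moreover have "\<bar>t * (qv C p d1 (Suc n) - qv C p d2 (Suc n))\<bar> \<le> t * (B * norm (d1 - d2))"
      using a2 t by (simp add: abs_mult mult_left_mono)
    ultimately show ?thesis by linarith
  qed
  also have "\<dots> = B * norm (d1 - d2)" by (simp add: algebra_simps)
  finally show ?thesis .
qed

lemma qvr_seg:
  assumes "real k \<le> t" "t \<le> real (Suc k)"
  shows "qvr C p d t = qv C p d k + (t - real k) * (qv C p d (Suc k) - qv C p d k)"
proof (cases "t < real (Suc k)")
  case True
  then have "\<lfloor>t\<rfloor> = int k" using assms by (intro floor_unique) auto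
  then show ?thesis unfolding qvr_def by (simp add: algebra_simps)
next
  case False
  then have "t = real (Suc k)" using assms by simp
  then have f1: "nat \<lfloor>t\<rfloor> = Suc k" and f2: "of_int \<lfloor>t\<rfloor> = t"
    by (metis floor_of_nat nat_int, metis floor_of_nat of_int_of_nat_eq)
  show ?thesis unfolding qvr_def f1 f2 using \<open>t = real (Suc k)\<close> by (simp add: algebra_simps)
qed

lemma qvr_lip_K:
  assumes "\<And>j. 0 \<le> C j d \<and> C j d \<le> 1" "0 \<le> p" "p \<le> 1" "0 \<le> a" "a \<le> b"
  shows "\<bar>qvr C p d b - qvr C p d a\<bar> \<le> b - a"
proof -
  define R where "R a b \<longleftrightarrow> \<bar>qvr C p d b - qvr C p d a\<bar> \<le> b - a" for a b
  have "R a b"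
  proof (rule chain_lemma[where x = real and L = "nat \<lceil>b\<rceil>"])
    show "R a c" if "a \<le> b" "b \<le> c" "R a b" "R b c" for a b c
      using that unfolding R_def by linarith
    show "R a a" for a unfolding R_def by simp
    show "R a b" if "i < nat \<lceil>b'\<rceil>" "real i \<le> a" "a \<le> b" "b \<le> real (Suc i)" for i a b b'
    proof -
      have "qvr C p d b - qvr C p d a = (b - a) * (qv C p d (Suc i) - qv C p d i)"
        using qvr_seg[of i a C p d] qvr_seg[of i b C p d] that by (simp add: algebra_simps)
      moreover have "\<bar>qv C p d (Suc i) - qv C p d i\<bar> \<le> 1"
        using qv_range[of C d p i, OF assms(1-3)] qv_range[of C d p "Suc i", OF assms(1-3)] by linarith
      ultimately show ?thesis unfolding R_def using that
        by (simp add: abs_mult mult_left_le)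
    qed
  qed (use assms in \<open>auto simp: real_nat_ceiling_ge\<close>)
  then show ?thesis by (simp add: R_def)
qed

lemma qvr_lower:
  assumes "\<And>j. C (Suc j) d \<le> C j d" "0 \<le> m" "m \<le> 1" "m \<le> p1" "p1 \<le> p2" "p2 \<le> 1 - m"
    "0 \<le> K" "Suc (nat \<lfloor>K\<rfloor>) \<le> M"
  shows "(p2 - p1) * m ^ M * ((1 - (K - real (nat \<lfloor>K\<rfloor>))) * (C 0 d - C (nat \<lfloor>K\<rfloor>) d)
           + (K - real (nat \<lfloor>K\<rfloor>)) * (C 0 d - C (Suc (nat \<lfloor>K\<rfloor>)) d))
         \<le> qvr C p1 d K - qvr C p2 d K"
proof -
  define t where "t = K - real (nat \<lfloor>K\<rfloor>)"
  define n where "n = nat \<lfloor>K\<rfloor>"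
  define z where "z = (p2 - p1) * m ^ M"
  have t: "0 \<le> t" "t < 1" using frac_bounds[OF assms(7)] by (auto simp: t_def)
  have a1: "z * (C 0 d - C n d) \<le> qv C p1 d n - qv C p2 d n"
    unfolding qv_bq z_def using assms by (intro bq_lower_gen) (auto simp: n_def)
  have a2: "z * (C 0 d - C (Suc n) d) \<le> qv C p1 d (Suc n) - qv C p2 d (Suc n)"
    unfolding qv_bq z_def using assms by (intro bq_lower_gen) (auto simp: n_def)
  have "qvr C p1 d K - qvr C p2 d K = (1 - t) * (qv C p1 d n - qv C p2 d n)
       + t * (qv C p1 d (Suc n) - qv C p2 d (Suc n))"
    using qvr_split[OF assms(7), of C p1 d] qvr_split[OF assms(7), of C p2 d]
    by (simp add: t_def n_def algebra_simps)
  moreover have "(1 - t) * (z * (C 0 d - C n d)) \<le> (1 - t) * (qv C p1 d n - qv C p2 d n)"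
    using a1 t by (intro mult_left_mono) auto
  moreover have "t * (z * (C 0 d - C (Suc n) d)) \<le> t * (qv C p1 d (Suc n) - qv C p2 d (Suc n))"
    using a2 t by (intro mult_left_mono) auto
  ultimately have "z * ((1 - t) * (C 0 d - C n d) + t * (C 0 d - C (Suc n) d)) \<le> qvr C p1 d K - qvr C p2 d K"
    by (simp add: algebra_simps)
  then show ?thesis by (simp add: z_def t_def n_def)
qed

lemma simplex_convex:
  assumes "x \<in> simplexM" "y \<in> simplexM" "0 \<le> l" "l \<le> 1"
  shows "(1 - l) *\<^sub>R x + l *\<^sub>R y \<in> simplexM"
proof -
  have x: "\<And>i. 0 \<le> x $ i \<and> x $ i \<le> 1" "(\<Sum>i\<in>UNIV. x $ i) = 1" using assms(1) by (auto simp: simplexM_def)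
  have y: "\<And>i. 0 \<le> y $ i \<and> y $ i \<le> 1" "(\<Sum>i\<in>UNIV. y $ i) = 1" using assms(2) by (auto simp: simplexM_def)
  have c: "0 \<le> (1 - l) * x $ i + l * y $ i \<and> (1 - l) * x $ i + l * y $ i \<le> 1" for i
  proof -
    have "(1 - l) * x $ i \<le> (1 - l) * 1" using x assms by (intro mult_left_mono) auto
    moreover have "l * y $ i \<le> l * 1" using y assms by (intro mult_left_mono) auto
    moreover have "0 \<le> (1 - l) * x $ i" "0 \<le> l * y $ i" using x y assms by auto
    ultimately show ?thesis by (simp add: algebra_simps)
  qed
  have "(\<Sum>i\<in>UNIV. (1 - l) * x $ i + l * y $ i) = (1 - l) * (\<Sum>i\<in>UNIV. x $ i) + l * (\<Sum>i\<in>UNIV. y $ i)"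
    by (simp add: sum.distrib sum_distrib_left)
  then show ?thesis using c x y by (simp add: simplexM_def)
qed

lemma simplex_norm: assumes "d \<in> simplexM" shows "norm d \<le> 1"
proof -
  have "norm d \<le> (\<Sum>i\<in>UNIV. \<bar>d $ i\<bar>)" by (rule norm_le_l1_cart)
  also have "\<dots> = (\<Sum>i\<in>UNIV. d $ i)" using assms by (intro sum.cong) (auto simp: simplexM_def)
  also have "\<dots> = 1" using assms by (simp add: simplexM_def)
  finally show ?thesis .
qed



lemma lK_aux:
  fixes a b K l :: real
  assumes "a = real (Kp (i - 1))" "b = real (Kp i)" "a < b" "a \<le> K" "K < b" "l = (K - a) / (b - a)"
  shows "0 \<le> l \<and> l < 1 \<and> Kil Kp i l = K"
proof -
  have d: "b - a > 0" using assms by simp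
  have "0 \<le> l" using assms d by simp
  moreover have "l < 1" using assms d by (simp add: divide_less_eq)
  moreover have "(1 - l) * a + l * b = K"
  proof -
    have "(1 - l) * a + l * b = a + l * (b - a)" by (simp add: algebra_simps)
    also have "l * (b - a) = K - a" using d assms(6) by simp
    finally show ?thesis by simp
  qed
  ultimately show ?thesis using assms(1,2) by (simp add: Kil_def)
qed

theorem theorem7:
  fixes C :: "nat \<Rightarrow> real ^ 'm \<Rightarrow> real"
    and Kp :: "nat \<Rightarrow> nat" and L :: nat
    and pp :: "nat \<Rightarrow> real" and dd :: "nat \<Rightarrow> real ^ 'm"
    and eps_q eps_v plo phi :: real
    and pf :: "real \<Rightarrow> real" and df :: "real \<Rightarrow> real ^ 'm"
  assumes C_range: "\<And>j d. d \<in> simplexM \<Longrightarrow> 0 \<le> C j d \<and> C j d \<le> 1"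
    and C_lip: "\<And>j. \<exists>B. B-lipschitz_on simplexM (C j)"
    and C_mono: "\<And>j d. d \<in> simplexM \<Longrightarrow> C j d \<ge> C (Suc j) d"
    and L_pos: "L \<ge> 1"
    and Kp_incr: "\<And>i. i < L \<Longrightarrow> Kp i < Kp (Suc i)"
    and pp_range: "\<And>i. i \<le> L \<Longrightarrow> 0 < pp i \<and> pp i < 1"
    and dd_simplex: "\<And>i. i \<le> L \<Longrightarrow> dd i \<in> simplexM"
    and cond1: "eps_q > 0"
      "\<And>i. 1 \<le> i \<Longrightarrow> i \<le> L \<Longrightarrow>
         qstar_pin C Kp pp dd (i - 1) - qstar_pin C Kp pp dd i \<ge> eps_q"
    and cond2: "eps_v > 0"
      "\<And>i l. 1 \<le> i \<Longrightarrow> i \<le> L \<Longrightarrow> 0 \<le> l \<Longrightarrow> l < 1 \<Longrightarrow>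
         J_exists C eps_v (dil dd i l) \<and> Kil Kp i l > real (Jeps C eps_v (dil dd i l))"
    and cond3: "0 < plo" "plo < phi" "phi < 1"
      "\<And>i. 1 \<le> i \<Longrightarrow> i \<le> L \<Longrightarrow> plo \<le> pp i \<and> pp i \<le> phi"
    and cond4: "\<And>i l. 1 \<le> i \<Longrightarrow> i \<le> L \<Longrightarrow> 0 \<le> l \<Longrightarrow> l < 1 \<Longrightarrow>
         qvr C phi (dil dd i l) (Kil Kp i l) \<le> qil C Kp pp dd i l
         \<and> qil C Kp pp dd i l \<le> qvr C plo (dil dd i l) (Kil Kp i l)"
    and interp: "\<And>i l. 1 \<le> i \<Longrightarrow> i \<le> L \<Longrightarrow> 0 \<le> l \<Longrightarrow> l < 1 \<Longrightarrow>
         plo \<le> pf (Kil Kp i l) \<and> pf (Kil Kp i l) \<le> phi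
         \<and> qvr C (pf (Kil Kp i l)) (dil dd i l) (Kil Kp i l) = qil C Kp pp dd i l
         \<and> df (Kil Kp i l) = dil dd i l"
    and endpt: "pf (real (Kp L)) = pp L" "df (real (Kp L)) = dd L"
  shows
    "(\<exists>Kg>0. \<forall>a\<in>{real (Kp 0)..real (Kp L)}. \<forall>b\<in>{real (Kp 0)..real (Kp L)}.
        norm (pf a *\<^sub>R df a - pf b *\<^sub>R df b) \<le> Kg * \<bar>a - b\<bar>)
   \<and> continuous_on {real (Kp 0)..real (Kp L)} (\<lambda>K. qvr C (pf K) (df K) K)
   \<and> (\<forall>a\<in>{real (Kp 0)..real (Kp L)}. \<forall>b\<in>{real (Kp 0)..real (Kp L)}.
        a < b \<longrightarrow> qvr C (pf b) (df b) b < qvr C (pf a) (df a) a)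
   \<and> (\<exists>e'>0. \<forall>a\<in>{real (Kp 0)..real (Kp L)}. \<forall>b\<in>{real (Kp 0)..real (Kp L)}.
        \<bar>qvr C (pf a) (df a) a - qvr C (pf b) (df b) b\<bar> \<ge> e' * \<bar>a - b\<bar>)
   \<and> (\<forall>K\<in>{real (Kp 0)..<real (Kp L)}.
        J_exists C eps_v (df K) \<and> K > real (Jeps C eps_v (df K)))
   \<and> (\<forall>K\<in>{real (Kp 0)..real (Kp L)}. plo \<le> pf K \<and> pf K \<le> phi)"
proof -
  define N where "N = Kp L"
  define Q where "Q K = qvr C (pf K) (df K) K" for K
  define qs where "qs i = qstar_pin C Kp pp dd i" for i
  define Dl where "Dl i = real (Kp i) - real (Kp (i - 1))" for i
  have Kmono: "Kp i < Kp j" if "i < j" "j \<le> L" for i j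
    using that
  proof (induction j)
    case 0 then show ?case by simp
  next
    case (Suc j) then show ?case using Kp_incr[of j] by (cases "i = j") auto
  qed
  have Kmono': "Kp i \<le> Kp j" if "i \<le> j" "j \<le> L" for i j
    using Kmono[of i j] that by (cases "i = j") auto
  have Dl_ge: "1 \<le> Dl i" if "1 \<le> i" "i \<le> L" for i
    using Kmono[of "i - 1" i] that by (simp add: Dl_def)
  have Dl_le: "Dl i \<le> real N - real (Kp 0)" if "1 \<le> i" "i \<le> L" for i
  proof -
    have "Kp i \<le> Kp L" "Kp 0 \<le> Kp (i - 1)" using Kmono'[of i L] Kmono'[of 0 "i - 1"] that by auto
    then have "real (Kp i) \<le> real (Kp L)" "real (Kp 0) \<le> real (Kp (i - 1))" by simp_all
    then show ?thesis by (simp add: Dl_def N_def)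
  qed
  have Crange: "\<And>j. 0 \<le> C j d \<and> C j d \<le> 1" if "d \<in> simplexM" for d
    using C_range that by blast
  have dil_simplex: "dil dd i l \<in> simplexM" if "1 \<le> i" "i \<le> L" "0 \<le> l" "l \<le> 1" for i l
    unfolding dil_def using that dd_simplex by (intro simplex_convex) auto
  have qs_range: "0 \<le> qs i \<and> qs i \<le> 1" if "i \<le> L" for i
    unfolding qs_def qstar_pin_def using that pp_range[of i] dd_simplex[of i]
    by (intro qvr_range Crange) auto
  have loc: "\<exists>i. 1 \<le> i \<and> i \<le> L \<and> real (Kp (i - 1)) \<le> K \<and> K < real (Kp i)"
    if "real (Kp 0) \<le> K" "K < real (Kp L)" for K
  proof -
    have "\<exists>i. 1 \<le> i \<and> i \<le> k \<and> real (Kp (i - 1)) \<le> K \<and> K < real (Kp i)" if "k \<le> L" "K < real (Kp k)" for k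
      using that
    proof (induction k)
      case 0 then show ?case using \<open>real (Kp 0) \<le> K\<close> by simp
    next
      case (Suc k)
      show ?case
      proof (cases "K < real (Kp k)")
        case True
        then obtain i where "1 \<le> i" "i \<le> k" "real (Kp (i - 1)) \<le> K" "K < real (Kp i)"
          using Suc.IH Suc.prems(1) by auto
        then show ?thesis by (intro exI[of _ i]) auto
      next
        case False
        have "1 \<le> Suc k" "Suc k \<le> Suc k" "real (Kp (Suc k - 1)) \<le> K" "K < real (Kp (Suc k))"
          using False Suc.prems by auto
        then show ?thesis by blast
      qed
    qed
    then show ?thesis using that by blast
  qed
  have loc2: "\<exists>i l. 1 \<le> i \<and> i \<le> L \<and> 0 \<le> l \<and> l < 1 \<and> Kil Kp i l = K
        \<and> l = (K - real (Kp (i - 1))) / Dl i"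
    if "real (Kp 0) \<le> K" "K < real (Kp L)" for K
  proof -
    from loc[OF that] obtain i where i: "1 \<le> i" "i \<le> L" "real (Kp (i - 1)) \<le> K" "K < real (Kp i)"
      by blast
    define l where "l = (K - real (Kp (i - 1))) / Dl i"
    have D: "0 < Dl i" using Dl_ge[OF i(1,2)] by simp
    have lK: "0 \<le> l \<and> l < 1 \<and> Kil Kp i l = K"
    proof (rule lK_aux[where a = "real (Kp (i - 1))" and b = "real (Kp i)"])
      show "real (Kp (i - 1)) < real (Kp i)" using D unfolding Dl_def by linarith
      show "l = (K - real (Kp (i - 1))) / (real (Kp i) - real (Kp (i - 1)))"
        unfolding l_def Dl_def ..
    qed (use i in simp_all)
    show ?thesis
      by (rule exI[of _ i], rule exI[of _ l]) (use i lK l_def in simp)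
  qed
  have seg: "df K = dd (i - 1) + ((K - real (Kp (i - 1))) / Dl i) *\<^sub>R (dd i - dd (i - 1))
     \<and> Q K = qs (i - 1) + ((K - real (Kp (i - 1))) / Dl i) * (qs i - qs (i - 1))"
    if i: "1 \<le> i" "i \<le> L" "real (Kp (i - 1)) \<le> K" "K \<le> real (Kp i)" for i K
  proof (cases "K < real (Kp i)")
    case True
    define l where "l = (K - real (Kp (i - 1))) / Dl i"
    have D: "0 < Dl i" using Dl_ge[OF i(1,2)] by simp
    have lK: "0 \<le> l \<and> l < 1 \<and> Kil Kp i l = K"
    proof (rule lK_aux[where a = "real (Kp (i - 1))" and b = "real (Kp i)"])
      show "real (Kp (i - 1)) < real (Kp i)" using D unfolding Dl_def by linarith
      show "l = (K - real (Kp (i - 1))) / (real (Kp i) - real (Kp (i - 1)))"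
        unfolding l_def Dl_def ..
    qed (use i True in simp_all)
    have l: "0 \<le> l" "l < 1" and K: "Kil Kp i l = K" using lK by auto
    from interp[OF i(1,2) l] K have "df K = dil dd i l" "Q K = qil C Kp pp dd i l"
      by (auto simp: Q_def)
    then show ?thesis unfolding dil_def qil_def qs_def l_def[symmetric]
      by (simp add: algebra_simps)
  next
    case False
    then have K: "K = real (Kp i)" using i by simp
    have D: "0 < Dl i" using Dl_ge[OF i(1,2)] by simp
    have r: "(K - real (Kp (i - 1))) / Dl i = 1" using D K by (simp add: Dl_def)
    have "df K = dd i \<and> Q K = qs i"
    proof (cases "i < L")
      case True
      from interp[of "Suc i" 0] True have "df (Kil Kp (Suc i) 0) = dil dd (Suc i) 0"
        "qvr C (pf (Kil Kp (Suc i) 0)) (dil dd (Suc i) 0) (Kil Kp (Suc i) 0) = qil C Kp pp dd (Suc i) 0"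
        by auto
      moreover have "Kil Kp (Suc i) 0 = K" using K by (simp add: Kil_def)
      ultimately show ?thesis by (simp add: Q_def dil_def qil_def qs_def)
    next
      case False
      then have "i = L" using i by simp
      then show ?thesis using endpt K by (simp add: Q_def qs_def qstar_pin_def)
    qed
    then show ?thesis using r by simp
  qed
  have seg0: "df K = dd i + ((K - real (Kp i)) / Dl (Suc i)) *\<^sub>R (dd (Suc i) - dd i)
     \<and> Q K = qs i + ((K - real (Kp i)) / Dl (Suc i)) * (qs (Suc i) - qs i)"
    if "i < L" "real (Kp i) \<le> K" "K \<le> real (Kp (Suc i))" for i K
    using seg[of "Suc i" K] that by simp
  have DN: "real (Kp 0) < real N" using Kmono[of 0 L] L_pos by (simp add: N_def)
  define e' where "e' = eps_q / (real N - real (Kp 0))"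
  have e'pos: "0 < e'" using DN cond1(1) by (simp add: e'_def)
  have Qchain: "-(b - a) \<le> Q b - Q a \<and> Q b - Q a \<le> - e' * (b - a)"
    if ab: "real (Kp 0) \<le> a" "a \<le> b" "b \<le> real (Kp L)" for a b
  proof -
    define R where "R a b \<longleftrightarrow> (-(b - a) \<le> Q b - Q a \<and> Q b - Q a \<le> - e' * (b - a))" for a b
    have "R a b"
    proof (rule chain_lemma[where x = "\<lambda>i. real (Kp i)" and L = L])
      show "R a c" if "a \<le> b" "b \<le> c" "R a b" "R b c" for a b c
      proof -
        have "e' * (c - a) = e' * (c - b) + e' * (b - a)" by (simp add: algebra_simps)
        then show ?thesis using that unfolding R_def by linarith
      qed
      show "R a a" for a unfolding R_def by simp
      show "R a b" if i: "i < L" "real (Kp i) \<le> a" "a \<le> b" "b \<le> real (Kp (Suc i))" for i a b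
      proof -
        define D where "D = Dl (Suc i)"
        define g where "g = qs (Suc i) - qs i"
        have D1: "1 \<le> D" "D \<le> real N - real (Kp 0)" using Dl_ge[of "Suc i"] Dl_le[of "Suc i"] i
          by (auto simp: D_def)
        have g: "-1 \<le> g" "g \<le> - eps_q" using cond1(2)[of "Suc i"] qs_range[of i] qs_range[of "Suc i"] i
          by (auto simp: g_def qs_def)
        have "Q b - Q a = ((b - real (Kp i)) / D - (a - real (Kp i)) / D) * g"
          using seg0[of i a] seg0[of i b] i by (simp add: D_def g_def algebra_simps)
        also have "\<dots> = ((b - a) / D) * g" by (simp add: diff_divide_distrib)
        finally have e: "Q b - Q a = ((b - a) / D) * g" .
        have w0: "0 \<le> (b - a) / D" using i D1 by simp
        have w1: "(b - a) / D \<le> b - a" using i D1 by (simp add: divide_le_eq mult_le_cancel_left1 mult_le_cancel_left2)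
        have w2: "(b - a) / (real N - real (Kp 0)) \<le> (b - a) / D"
          using i D1 by (intro divide_left_mono) auto
        have "((b - a) / D) * (-1) \<le> ((b - a) / D) * g" using g w0 by (intro mult_left_mono) auto
        then have "Q b - Q a \<ge> - ((b - a) / D)" using e by simp
        moreover have "((b - a) / D) * g \<le> ((b - a) / D) * (- eps_q)" using g w0 by (intro mult_left_mono) auto
        then have "Q b - Q a \<le> - eps_q * ((b - a) / D)" using e by (simp add: mult.commute)
        moreover have "eps_q * ((b - a) / (real N - real (Kp 0))) \<le> eps_q * ((b - a) / D)"
          using w2 cond1(1) by (intro mult_left_mono) auto
        moreover have "e' * (b - a) = eps_q * ((b - a) / (real N - real (Kp 0)))"
          by (simp add: e'_def)
        ultimately show ?thesis unfolding R_def using w1 by linarith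
      qed
    qed (use ab in auto)
    then show ?thesis by (simp add: R_def)
  qed
  have Qchain2: "\<bar>Q b - Q a\<bar> \<le> b - a \<and> e' * (b - a) \<le> \<bar>Q b - Q a\<bar> \<and> \<bar>Q a - Q b\<bar> \<le> b - a
      \<and> e' * (b - a) \<le> \<bar>Q a - Q b\<bar>"
    if ab: "real (Kp 0) \<le> a" "a \<le> b" "b \<le> real (Kp L)" for a b
  proof -
    have "0 \<le> e' * (b - a)" using e'pos ab by simp
    then show ?thesis using Qchain[OF ab] by (auto simp: abs_if)
  qed
  have dd_norm: "norm (dd i) \<le> 1" if "i \<le> L" for i using dd_simplex[OF that] by (rule simplex_norm)
  have dfchain: "norm (df b - df a) \<le> 2 * (b - a)"
    if ab: "real (Kp 0) \<le> a" "a \<le> b" "b \<le> real (Kp L)" for a b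
  proof -
    define R where "R a b \<longleftrightarrow> norm (df b - df a) \<le> 2 * (b - a)" for a b
    have "R a b"
    proof (rule chain_lemma[where x = "\<lambda>i. real (Kp i)" and L = L])
      show "R a c" if "a \<le> b" "b \<le> c" "R a b" "R b c" for a b c
      proof -
        have "norm (df c - df a) \<le> norm (df c - df b) + norm (df b - df a)"
          using norm_triangle_ineq[of "df c - df b" "df b - df a"] by simp
        then show ?thesis using that unfolding R_def by (smt (verit))
      qed
      show "R a a" for a unfolding R_def by simp
      show "R a b" if i: "i < L" "real (Kp i) \<le> a" "a \<le> b" "b \<le> real (Kp (Suc i))" for i a b
      proof -
        define D where "D = Dl (Suc i)"
        define v where "v = dd (Suc i) - dd i"
        have D1: "1 \<le> D" using Dl_ge[of "Suc i"] i by (auto simp: D_def)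
        have nv: "norm v \<le> 2"
          using norm_triangle_ineq4[of "dd (Suc i)" "dd i"] dd_norm[of i] dd_norm[of "Suc i"] i
          by (simp add: v_def)
        have ea: "df a = dd i + ((a - real (Kp i)) / D) *\<^sub>R v" using seg0[of i a] i by (simp add: D_def v_def)
        have eb: "df b = dd i + ((b - real (Kp i)) / D) *\<^sub>R v" using seg0[of i b] i by (simp add: D_def v_def)
        have "df b - df a = ((b - real (Kp i)) / D - (a - real (Kp i)) / D) *\<^sub>R v"
          unfolding ea eb by (simp add: scaleR_diff_left)
        also have "\<dots> = ((b - a) / D) *\<^sub>R v" by (simp add: diff_divide_distrib)
        finally have e: "norm (df b - df a) = ((b - a) / D) * norm v" using i D1 by simp
        have w0: "0 \<le> (b - a) / D" using i D1 by simp
        have w1: "(b - a) / D \<le> b - a" using i D1 by (simp add: divide_le_eq mult_le_cancel_left1 mult_le_cancel_left2)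
        have "((b - a) / D) * norm v \<le> (b - a) * 2"
          using w0 w1 nv by (intro mult_mono) auto
        then show ?thesis unfolding R_def e by simp
      qed
    qed (use ab in auto)
    then show ?thesis by (simp add: R_def)
  qed
  have ptwise: "plo \<le> pf K \<and> pf K \<le> phi \<and> J_exists C eps_v (df K)
      \<and> K > real (Jeps C eps_v (df K)) \<and> df K \<in> simplexM"
    if "real (Kp 0) \<le> K" "K < real (Kp L)" for K
  proof -
    from loc2[OF that] obtain i l where il: "1 \<le> i" "i \<le> L" "0 \<le> l" "l < 1" "Kil Kp i l = K" by blast
    have "df K = dil dd i l" "plo \<le> pf K" "pf K \<le> phi" using interp[OF il(1-4)] il(5) by auto
    moreover have "J_exists C eps_v (df K) \<and> K > real (Jeps C eps_v (df K))"
      using cond2(2)[OF il(1-4)] il(5) \<open>df K = dil dd i l\<close> by simp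
    moreover have "df K \<in> simplexM" using dil_simplex[of i l] il \<open>df K = dil dd i l\<close> by simp
    ultimately show ?thesis by blast
  qed
  have ptL: "plo \<le> pf K \<and> pf K \<le> phi \<and> df K \<in> simplexM"
    if "real (Kp 0) \<le> K" "K \<le> real (Kp L)" for K
  proof (cases "K < real (Kp L)")
    case True then show ?thesis using ptwise[OF that(1) True] by blast
  next
    case False
    then have "K = real (Kp L)" using that by simp
    then show ?thesis using endpt cond3(4)[of L] L_pos dd_simplex[of L] by simp
  qed
  have "\<forall>j. \<exists>B. B-lipschitz_on simplexM (C j)" using C_lip by simp
  then obtain Bf :: "nat \<Rightarrow> real" where Bf: "\<forall>j. (Bf j)-lipschitz_on simplexM (C j)" by metis
  define B where "B = (\<Sum>j\<le>Suc N. Bf j)"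
  have Bfnn: "0 \<le> Bf j" for j using Bf lipschitz_on_nonneg by blast
  have B0: "0 \<le> B" unfolding B_def using Bfnn by (simp add: sum_nonneg)
  have Blip: "B-lipschitz_on simplexM (C j)" if "j \<le> Suc N" for j
  proof -
    have "Bf j \<le> B" unfolding B_def using that Bfnn by (intro member_le_sum) auto
    then show ?thesis using Bf lipschitz_on_le by blast
  qed
  have Cdiff: "\<bar>C j d1 - C j d2\<bar> \<le> B * norm (d1 - d2)"
    if "j \<le> Suc N" "d1 \<in> simplexM" "d2 \<in> simplexM" for j d1 d2
    using lipschitz_onD[OF Blip[OF that(1)] that(2,3)] by (simp add: dist_norm dist_real_def)
  have Canti: "C k d \<le> C i d" if "i \<le> k" "d \<in> simplexM" for i k d
    using antitone_le[of "\<lambda>j. C j d" i k] C_mono[OF that(2)] that(1) by blast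
  have Jgap: "C (Jeps C eps_v d) d > C (Suc (Jeps C eps_v d)) d + eps_v" if "J_exists C eps_v d" for d
    using that unfolding J_exists_def Jeps_def by (rule LeastI_ex)
  define H where "H K = (1 - (K - real (nat \<lfloor>K\<rfloor>))) * (C 0 (df K) - C (nat \<lfloor>K\<rfloor>) (df K))
      + (K - real (nat \<lfloor>K\<rfloor>)) * (C 0 (df K) - C (Suc (nat \<lfloor>K\<rfloor>)) (df K))" for K
  define tau where "tau = min (1/2) (eps_v / (8 * B + 1))"
  define h where "h = min (tau * eps_v) (eps_v / 4)"
  have tau: "0 < tau" "tau \<le> 1/2" "4 * B * tau \<le> eps_v / 2"
  proof -
    show "0 < tau" using cond2(1) B0 by (simp add: tau_def)
    show "tau \<le> 1/2" unfolding tau_def by (rule min.cobounded1)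
    have "B * tau \<le> B * (eps_v / (8 * B + 1))" using B0 by (intro mult_left_mono) (auto simp: tau_def)
    moreover have "B * (eps_v / (8 * B + 1)) \<le> eps_v / 8"
      using B0 cond2(1) by (simp add: divide_simps)
    ultimately have "B * tau \<le> eps_v / 8" by linarith
    then show "4 * B * tau \<le> eps_v / 2" by linarith
  qed
  have hpos: "0 < h" using tau cond2(1) by (simp add: h_def)
  have Hb: "h \<le> H K" if K: "real (Kp 0) \<le> K" "K < real (Kp L)" for K
  proof -
    define d where "d = df K"
    define n where "n = nat \<lfloor>K\<rfloor>"
    define t where "t = K - real n"
    have K0: "0 \<le> K" using K by simp
    have t: "0 \<le> t" "t < 1" using frac_bounds[OF K0] by (auto simp: t_def n_def)
    have pw: "J_exists C eps_v d" "K > real (Jeps C eps_v d)" "d \<in> simplexM"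
      using ptwise[OF K] by (auto simp: d_def)
    define J where "J = Jeps C eps_v d"
    have gap: "C J d > C (Suc J) d + eps_v" using Jgap[OF pw(1)] by (simp add: J_def)
    have Jn: "J \<le> n" unfolding n_def using pw(2) by (intro le_nat_floor) (simp add: J_def)
    have X1: "C 0 d - C (Suc n) d > eps_v"
      using Canti[of 0 J d] Canti[of "Suc J" "Suc n" d] pw(3) Jn gap by simp
    have X0: "0 \<le> C 0 d - C n d" using Canti[of 0 n d] pw(3) by simp
    have He: "H K = (1 - t) * (C 0 d - C n d) + t * (C 0 d - C (Suc n) d)"
      by (simp add: H_def t_def n_def d_def)
    have Ht: "t * eps_v \<le> H K"
    proof -
      have "t * eps_v \<le> t * (C 0 d - C (Suc n) d)" using t X1 by (intro mult_left_mono) auto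
      moreover have "0 \<le> (1 - t) * (C 0 d - C n d)" using t X0 by simp
      ultimately show ?thesis using He by linarith
    qed
    show ?thesis
    proof (cases "tau \<le> t")
      case True
      then have "tau * eps_v \<le> t * eps_v" using cond2(1) by (intro mult_right_mono) auto
      then show ?thesis using Ht by (simp add: h_def)
    next
      case False
      have "Kp 0 \<le> n" unfolding n_def using K(1) by (rule le_nat_floor)
      then have n0: "real (Kp 0) \<le> real n" by simp
      have nK: "real n \<le> K" using t by (simp add: t_def)
      have nL: "real n < real (Kp L)" using nK K by simp
      define d' where "d' = df (real n)"
      have pw': "J_exists C eps_v d'" "real n > real (Jeps C eps_v d')" "d' \<in> simplexM"
        using ptwise[OF n0 nL] by (auto simp: d'_def)
      define J' where "J' = Jeps C eps_v d'"
      have gap': "C J' d' > C (Suc J') d' + eps_v" using Jgap[OF pw'(1)] by (simp add: J'_def)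
      have Jn': "Suc J' \<le> n" using pw'(2) by (simp add: J'_def)
      have Y: "C 0 d' - C n d' > eps_v"
        using Canti[of 0 J' d'] Canti[of "Suc J'" n d'] pw'(3) Jn' gap' by simp
      have nd: "norm (d - d') \<le> 2 * t"
        using dfchain[OF n0 nK] K by (simp add: d_def d'_def t_def norm_minus_commute)
      have nN: "n \<le> Suc N" using nL by (simp add: N_def)
      have c0: "\<bar>C 0 d - C 0 d'\<bar> \<le> B * norm (d - d')" using Cdiff[of 0 d d'] pw(3) pw'(3) by simp
      have cn: "\<bar>C n d - C n d'\<bar> \<le> B * norm (d - d')" using Cdiff[of n d d'] nN pw(3) pw'(3) by simp
      have "B * norm (d - d') \<le> B * (2 * t)" using nd B0 by (intro mult_left_mono) auto
      moreover have "B * t \<le> B * tau" using False B0 by (intro mult_left_mono) auto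
      ultimately have "C 0 d - C n d \<ge> eps_v / 2" using c0 cn Y tau(3) by linarith
      then have "(1 - t) * (eps_v / 2) \<le> (1 - t) * (C 0 d - C n d)" using t by (intro mult_left_mono) auto
      moreover have "0 \<le> t * (C 0 d - C (Suc n) d)" using t X1 cond2(1) by simp
      moreover have "eps_v / 4 \<le> (1 - t) * (eps_v / 2)"
      proof -
        have "eps_v * t \<le> eps_v * (1/2)" using False tau(2) cond2(1) by (intro mult_left_mono) auto
        then show ?thesis by (simp add: algebra_simps)
      qed
      ultimately show ?thesis using He by (simp add: h_def)
    qed
  qed
  define m where "m = min plo (1 - phi)"
  have m: "0 < m" "m \<le> 1" "m \<le> plo" "phi \<le> 1 - m" using cond3(1-3) by (auto simp: m_def)
  define c0 where "c0 = m ^ Suc N"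
  have c0: "0 < c0" using m by (simp add: c0_def)
  define P where "P = (2 * B + 2) / (c0 * h)"
  have P0: "0 \<le> P" using B0 c0 hpos by (simp add: P_def)
  have natN: "nat \<lfloor>x\<rfloor> \<le> N" if "x \<le> real (Kp L)" for x
    using that unfolding N_def by (metis floor_mono floor_of_nat nat_int nat_mono)
  have pflip: "\<bar>pf a - pf b\<bar> \<le> P * (b - a)"
    if ab: "real (Kp 0) \<le> a" "a \<le> b" "b \<le> real (Kp L)" for a b
  proof (cases "a = b")
    case True then show ?thesis by simp
  next
    case False
    then have ab': "a < b" "a < real (Kp L)" using ab by auto
    define pa where "pa = pf a"
    define pb where "pb = pf b"
    define da where "da = df a"
    define db where "db = df b"
    have A: "plo \<le> pa" "pa \<le> phi" "da \<in> simplexM" using ptL[of a] ab by (auto simp: pa_def da_def)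
    have Bb: "plo \<le> pb" "pb \<le> phi" "db \<in> simplexM" using ptL[of b] ab by (auto simp: pb_def db_def)
    have a0: "0 \<le> a" using ab by simp
    define u where "u = qvr C pa da a"
    define v where "v = qvr C pb da a"
    have Ha: "h \<le> H a" using Hb[OF ab(1) ab'(2)] .
    have He: "H a = (1 - (a - real (nat \<lfloor>a\<rfloor>))) * (C 0 da - C (nat \<lfloor>a\<rfloor>) da)
      + (a - real (nat \<lfloor>a\<rfloor>)) * (C 0 da - C (Suc (nat \<lfloor>a\<rfloor>)) da)" by (simp add: H_def da_def)
    have anti: "\<And>j. C (Suc j) da \<le> C j da" using C_mono A(3) by blast
    have sN: "Suc (nat \<lfloor>a\<rfloor>) \<le> Suc N" using natN[of a] ab by simp
    have low: "c0 * h * \<bar>pa - pb\<bar> \<le> \<bar>u - v\<bar>"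
    proof (cases "pa \<le> pb")
      case True
      have "(pb - pa) * m ^ Suc N * H a \<le> u - v"
        unfolding u_def v_def He using qvr_lower[of C da m pa pb a "Suc N", OF anti] m A Bb True a0 sN
        by simp
      moreover have "(pb - pa) * c0 * h \<le> (pb - pa) * c0 * H a" using Ha True c0 by (intro mult_left_mono) auto
      ultimately show ?thesis using True by (simp add: c0_def algebra_simps)
    next
      case False
      have "(pa - pb) * m ^ Suc N * H a \<le> v - u"
        unfolding u_def v_def He using qvr_lower[of C da m pb pa a "Suc N", OF anti] m A Bb False a0 sN
        by simp
      moreover have "(pa - pb) * c0 * h \<le> (pa - pb) * c0 * H a" using Ha False c0 by (intro mult_left_mono) auto
      ultimately show ?thesis using False by (simp add: c0_def algebra_simps)
    qed
    have up1: "\<bar>Q a - Q b\<bar> \<le> b - a" using Qchain2[OF ab] by simp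
    have up2: "\<bar>qvr C pb db b - qvr C pb da b\<bar> \<le> B * norm (db - da)"
    proof (rule qvr_lip_d)
      show "j \<le> Suc (nat \<lfloor>b\<rfloor>) \<Longrightarrow> B-lipschitz_on simplexM (C j)" for j
        using natN[of b] ab by (intro Blip) simp
    qed (use Bb cond3 ab A in auto)
    have up3: "\<bar>qvr C pb da b - qvr C pb da a\<bar> \<le> b - a"
      using qvr_lip_K[of C da pb a b] Crange[OF A(3)] Bb cond3 a0 ab by simp
    have nd: "norm (db - da) \<le> 2 * (b - a)" using dfchain[OF ab] by (simp add: da_def db_def)
    have "B * norm (db - da) \<le> B * (2 * (b - a))" using nd B0 by (intro mult_left_mono) auto
    moreover have "Q a = u" "Q b = qvr C pb db b" by (simp_all add: Q_def u_def pa_def da_def pb_def db_def)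
    ultimately have "\<bar>u - v\<bar> \<le> (2 * B + 2) * (b - a)" using up1 up2 up3 unfolding v_def
      by (simp add: algebra_simps)
    then have "\<bar>pa - pb\<bar> * (c0 * h) \<le> (2 * B + 2) * (b - a)" using low by (simp add: algebra_simps)
    then have "\<bar>pa - pb\<bar> \<le> (2 * B + 2) * (b - a) / (c0 * h)" using c0 hpos by (simp add: le_divide_eq)
    then show ?thesis by (simp add: P_def pa_def pb_def)
  qed
  have normA: "norm (pf a *\<^sub>R df a - pf b *\<^sub>R df b) \<le> (P + 2) * (b - a)"
    if ab: "real (Kp 0) \<le> a" "a \<le> b" "b \<le> real (Kp L)" for a b
  proof -
    have A: "norm (df a) \<le> 1" "\<bar>pf b\<bar> \<le> 1" using ptL[of a] ptL[of b] ab simplex_norm cond3 by auto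
    have "pf a *\<^sub>R df a - pf b *\<^sub>R df b = (pf a - pf b) *\<^sub>R df a + pf b *\<^sub>R (df a - df b)"
      by (simp add: algebra_simps)
    then have "norm (pf a *\<^sub>R df a - pf b *\<^sub>R df b) \<le> \<bar>pf a - pf b\<bar> * norm (df a) + \<bar>pf b\<bar> * norm (df a - df b)"
      by (metis norm_scaleR norm_triangle_ineq)
    also have "\<dots> \<le> (P * (b - a)) * 1 + 1 * (2 * (b - a))"
    proof (intro add_mono mult_mono)
      show "\<bar>pf a - pf b\<bar> \<le> P * (b - a)" by (rule pflip[OF ab])
      show "norm (df a - df b) \<le> 2 * (b - a)" using dfchain[OF ab] by (simp add: norm_minus_commute)
    qed (use A P0 ab in auto)
    finally show ?thesis by (simp add: algebra_simps)
  qed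
  show ?thesis unfolding Q_def[symmetric]
  proof (intro conjI)
    show "\<exists>Kg>0. \<forall>a\<in>{real (Kp 0)..real (Kp L)}. \<forall>b\<in>{real (Kp 0)..real (Kp L)}.
        norm (pf a *\<^sub>R df a - pf b *\<^sub>R df b) \<le> Kg * \<bar>a - b\<bar>"
    proof (intro exI[of _ "P + 2"] conjI ballI)
      show "0 < P + 2" using P0 by simp
      fix a b assume a: "a \<in> {real (Kp 0)..real (Kp L)}" and b: "b \<in> {real (Kp 0)..real (Kp L)}"
      show "norm (pf a *\<^sub>R df a - pf b *\<^sub>R df b) \<le> (P + 2) * \<bar>a - b\<bar>"
      proof (cases "a \<le> b")
        case True then show ?thesis using normA[of a b] a b by simp
      next
        case False then show ?thesis using normA[of b a] a b by (simp add: norm_minus_commute)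
      qed
    qed
    have Qlip: "1-lipschitz_on {real (Kp 0)..real (Kp L)} Q"
    proof (rule lipschitz_onI)
      fix x y assume x: "x \<in> {real (Kp 0)..real (Kp L)}" and y: "y \<in> {real (Kp 0)..real (Kp L)}"
      show "dist (Q x) (Q y) \<le> 1 * dist x y"
      proof (cases "x \<le> y")
        case True then show ?thesis using Qchain2[of x y] x y by (simp add: dist_real_def)
      next
        case False then show ?thesis using Qchain2[of y x] x y by (simp add: dist_real_def)
      qed
    qed simp
    show "continuous_on {real (Kp 0)..real (Kp L)} Q"
      using lipschitz_on_continuous_on[OF Qlip] .
    show "\<forall>a\<in>{real (Kp 0)..real (Kp L)}. \<forall>b\<in>{real (Kp 0)..real (Kp L)}. a < b \<longrightarrow> Q b < Q a"
    proof (intro ballI impI)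
      fix a b assume a: "a \<in> {real (Kp 0)..real (Kp L)}" and b: "b \<in> {real (Kp 0)..real (Kp L)}" and "a < b"
      then have "Q b - Q a \<le> - e' * (b - a)" using Qchain[of a b] by simp
      moreover have "0 < e' * (b - a)" using e'pos \<open>a < b\<close> by simp
      ultimately show "Q b < Q a" by simp
    qed
    show "\<exists>e'>0. \<forall>a\<in>{real (Kp 0)..real (Kp L)}. \<forall>b\<in>{real (Kp 0)..real (Kp L)}.
        e' * \<bar>a - b\<bar> \<le> \<bar>Q a - Q b\<bar>"
    proof (intro exI[of _ e'] conjI ballI)
      show "0 < e'" by (rule e'pos)
      fix a b assume a: "a \<in> {real (Kp 0)..real (Kp L)}" and b: "b \<in> {real (Kp 0)..real (Kp L)}"
      show "e' * \<bar>a - b\<bar> \<le> \<bar>Q a - Q b\<bar>"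
      proof (cases "a \<le> b")
        case True then show ?thesis using Qchain2[of a b] a b by simp
      next
        case False then show ?thesis using Qchain2[of b a] a b by simp
      qed
    qed
    show "\<forall>K\<in>{real (Kp 0)..<real (Kp L)}. J_exists C eps_v (df K) \<and> real (Jeps C eps_v (df K)) < K"
      using ptwise by auto
    show "\<forall>K\<in>{real (Kp 0)..real (Kp L)}. plo \<le> pf K \<and> pf K \<le> phi"
      using ptL by auto
  qed
qed

end
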